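(* Let $p\in\mathbb{R}[x_1,x_2]_{2d}$ (not necessarily a sum of squares). For every $\mathbf{u}=(u_1,u_2)\in\mathbb{R}[x_1,x_2]_d^2$ with $\nabla f_p(\mathbf{u})=0$ and $\nabla^2 f_p(\mathbf{u})\succeq0$, the form $u_1^2+u_2^2$ is the projection of $p$ onto the cone $\Sigma[x_1,x_2]_{2d}$ with respect to the inner product defining $f_p$; that is, $f_p(\mathbf{u})=\|u_1^2+u_2^2-p\|^2\le\|q-p\|^2$ for all $q\in\Sigma[x_1,x_2]_{2d}$.
   Context: $\mathbb{R}[x_1,x_2]_n$ denotes the space of real binary forms (homogeneous polynomials in $x_1,x_2$) of degree $n$, and $\Sigma[x_1,x_2]_{2d}$ the cone of sums of squares of binary forms of degree $d$. Fix any inner product $\langle\cdot,\cdot\rangle$ on $\mathbb{R}[x_1,x_2]_{2d}$ with norm $\|\cdot\|$, and let $f_p(\mathbf{u})=\|u_1^2+u_2^2-p\|^2$ on $\mathbb{R}[x_1,x_2]_d^2$; derivatives are with respect to this finite-dimensional real vector space ($\nabla f_p(\mathbf{u})=0$: all first directional derivatives vanish; $\nabla^2 f_p(\mathbf{u})\succeq0$: all second directional derivatives are nonnegative). *)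

theory Defs
  imports "HOL-Analysis.Analysis" "HOL-Computational_Algebra.Polynomial"
begin

text \<open>A real binary form of degree n, sum of a_i x1^i x2^(n-i), is represented by its
  dehomogenisation, the univariate polynomial sum of a_i x^i, of degree at most n.
  This identification is a linear isomorphism compatible with multiplication.\<close>

definition bforms :: "nat \<Rightarrow> real poly set" where
  "bforms n = {q. degree q \<le> n}"

definition sos_cone :: "nat \<Rightarrow> real poly set" where
  "sos_cone d = {q. \<exists>gs. (\<forall>g\<in>set gs. g \<in> bforms d) \<and> q = sum_list (map (\<lambda>g. g^2) gs)}"

definition inner_prod_on :: "real poly set \<Rightarrow> (real poly \<Rightarrow> real poly \<Rightarrow> real) \<Rightarrow> bool" where
  "inner_prod_on V ip \<longleftrightarrow>
     (\<forall>x\<in>V. \<forall>y\<in>V. ip x y = ip y x) \<and>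
     (\<forall>x\<in>V. \<forall>y\<in>V. \<forall>z\<in>V. ip (x + y) z = ip x z + ip y z) \<and>
     (\<forall>c. \<forall>x\<in>V. \<forall>y\<in>V. ip (smult c x) y = c * ip x y) \<and>
     (\<forall>x\<in>V. x \<noteq> 0 \<longrightarrow> ip x x > 0)"

definition fp :: "(real poly \<Rightarrow> real poly \<Rightarrow> real) \<Rightarrow> real poly \<Rightarrow> real poly \<Rightarrow> real poly \<Rightarrow> real" where
  "fp ip p u1 u2 = ip (u1^2 + u2^2 - p) (u1^2 + u2^2 - p)"

definition fp_line :: "(real poly \<Rightarrow> real poly \<Rightarrow> real) \<Rightarrow> real poly \<Rightarrow> real poly \<Rightarrow> real poly
    \<Rightarrow> real poly \<Rightarrow> real poly \<Rightarrow> real \<Rightarrow> real" where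
  "fp_line ip p u1 u2 v1 v2 t = fp ip p (u1 + smult t v1) (u2 + smult t v2)"

end

theory Submission
  imports Defs "HOL-Computational_Algebra.Computational_Algebra" "HOL-Computational_Algebra.Field_as_Ring"
begin


lemma quad_nonneg:
  fixes c A :: real
  assumes "\<forall>t. c + t^2 * A \<ge> 0" shows "A \<ge> 0"
proof (rule ccontr)
  assume "\<not> A \<ge> 0"
  hence A: "A < 0" by simp
  define t where "t = sqrt ((\<bar>c\<bar> + 1) / (- A))"
  have nn: "(\<bar>c\<bar> + 1) / (- A) \<ge> 0" using A by (intro divide_nonneg_pos) auto
  have "t^2 = (\<bar>c\<bar> + 1) / (- A)" unfolding t_def using real_sqrt_pow2[OF nn] by simp
  hence "t^2 * A = - (\<bar>c\<bar> + 1)" using A by (simp add: field_simps)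
  moreover have "c + t^2 * A \<ge> 0" using assms by blast
  ultimately show False by linarith
qed

lemma lin_zero:
  fixes c B :: real
  assumes "\<forall>t. c + t * B \<ge> 0" shows "B = 0"
proof (rule ccontr)
  assume B: "B \<noteq> 0"
  define t where "t = - (\<bar>c\<bar> + 1) / B"
  have "t * B = - (\<bar>c\<bar> + 1)" unfolding t_def using B by (simp add: field_simps)
  moreover have "c + t * B \<ge> 0" using assms by blast
  ultimately show False by linarith
qed

lemma coprime_bezout_poly:
  fixes a b :: "real poly"
  assumes "coprime a b"
  obtains s t where "s * a + t * b = 1"
proof -
  have "gcd a b = 1" using assms by (simp add: coprime_iff_gcd_eq_1)
  thus ?thesis using bezout_coefficients_fst_snd[of a b] that by metis
qed

lemma span2_aux:
  fixes a1 a2 w :: "real poly"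
  assumes cop: "coprime a1 a2" and nz: "a2 \<noteq> 0" and da1: "degree a1 \<le> a"
    and da2: "degree a2 = a" and am: "a \<le> m + 1" and dw: "degree w \<le> m + a"
  shows "\<exists>y1 y2. degree y1 \<le> m \<and> degree y2 \<le> m \<and> a1*y1 + a2*y2 = w"
proof -
  obtain s t where st: "s * a1 + t * a2 = 1" using coprime_bezout_poly[OF cop] by blast
  define y1 where "y1 = (s*w) mod a2"
  define q where "q = (s*w) div a2"
  define y2 where "y2 = t*w + a1*q"
  have sw: "s*w = q*a2 + y1" unfolding q_def y1_def by simp
  have eq: "a1*y1 + a2*y2 = w"
  proof -
    have "a1*y1 + a2*y2 = a1*(s*w - q*a2) + a2*(t*w + a1*q)" using sw unfolding y2_def
      by (simp add: algebra_simps)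
    also have "\<dots> = (s*a1 + t*a2) * w" by (simp add: algebra_simps)
    finally show ?thesis using st by simp
  qed
  have dy1: "y1 = 0 \<or> degree y1 < a" unfolding y1_def using degree_mod_less'[OF nz] da2 by blast
  have dy1m: "degree y1 \<le> m" using dy1 am by auto
  have "degree (a1*y1) \<le> m + a"
  proof (cases "y1 = 0")
    case True thus ?thesis by simp
  next
    case False
    hence "degree y1 < a" using dy1 by simp
    thus ?thesis using degree_mult_le[of a1 y1] da1 am by linarith
  qed
  moreover have "a2*y2 = w - a1*y1" using eq by (simp add: algebra_simps)
  ultimately have "degree (a2*y2) \<le> m + a"
    using dw by (metis degree_diff_le)
  hence dy2: "degree y2 \<le> m"
  proof (cases "y2 = 0")
    case True thus ?thesis by simp
  next
    case False
    thus ?thesis using \<open>degree (a2*y2) \<le> m + a\<close> degree_mult_eq[OF nz False] da2 by simp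
  qed
  show ?thesis using dy1m dy2 eq by blast
qed

lemma span2:
  fixes a1 a2 w :: "real poly"
  assumes cop: "coprime a1 a2" and nz: "a1 \<noteq> 0 \<or> a2 \<noteq> 0"
    and a: "a = max (degree a1) (degree a2)" and am: "a \<le> m + 1" and dw: "degree w \<le> m + a"
  shows "\<exists>y1 y2. degree y1 \<le> m \<and> degree y2 \<le> m \<and> a1*y1 + a2*y2 = w"
proof (cases "a2 \<noteq> 0 \<and> degree a2 = a")
  case True
  have "degree a1 \<le> a" using a by simp
  thus ?thesis using span2_aux[OF cop, of a m w] True am dw by blast
next
  case False
  have h1: "a1 \<noteq> 0"
  proof
    assume "a1 = 0"
    hence "a2 \<noteq> 0" "a = degree a2" using nz a by auto
    thus False using False by simp
  qed
  have h2: "degree a1 = a"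
  proof (cases "a2 = 0")
    case True thus ?thesis using a by simp
  next
    case F: False
    hence "degree a2 \<noteq> a" using False by simp
    thus ?thesis using a by (simp add: max_def split: if_splits)
  qed
  have cop': "coprime a2 a1" using cop by (simp add: coprime_commute)
  have "degree a2 \<le> a" using a by simp
  then obtain y2 y1 where "degree y2 \<le> m" "degree y1 \<le> m" "a2*y2 + a1*y1 = w"
    using span2_aux[OF cop' h1 _ h2 am dw] by blast
  thus ?thesis by (metis add.commute)
qed

lemma degree_le_pred:
  fixes p :: "real poly"
  assumes "degree p \<le> m" "coeff p m = 0" "m > 0"
  shows "degree p \<le> m - 1"
proof (rule degree_le, intro allI impI)
  fix i assume "m - 1 < i"
  hence "i = m \<or> i > m" using assms(3) by linarith
  thus "coeff p i = 0" using assms(1,2) coeff_eq_0[of p i] by auto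
qed

lemma coeff_mult_monom_top:
  fixes a1 :: "real poly"
  assumes "a \<le> m"
  shows "coeff (a1 * monom t (m - a)) m = coeff a1 a * t"
proof -
  have "coeff (a1 * monom t (m - a)) m = coeff (monom t (m - a) * a1) m" by (simp add: mult.commute)
  also have "\<dots> = t * coeff a1 a" using assms by (simp add: coeff_monom_mult)
  finally show ?thesis by simp
qed

lemma cdiv:
  fixes a1 a2 :: "real poly"
  assumes S: "coeff a1 a ^2 + coeff a2 a ^2 \<noteq> 0" and d1: "degree a1 \<le> a" and d2: "degree a2 \<le> a"
  shows "degree r1 \<le> m \<Longrightarrow> degree r2 \<le> m \<Longrightarrow> \<exists>\<theta>1 \<theta>2. degree \<theta>1 \<le> m - a \<and> degree \<theta>2 \<le> m - a \<and>
     (\<forall>i\<ge>a. coeff (r1 - (a1*\<theta>1 - a2*\<theta>2)) i = 0) \<and> (\<forall>i\<ge>a. coeff (r2 - (a2*\<theta>1 + a1*\<theta>2)) i = 0)"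
proof (induction m arbitrary: r1 r2 rule: less_induct)
  case (less m)
  show ?case
  proof (cases "m < a")
    case True
    have "\<forall>i\<ge>a. coeff r1 i = 0" "\<forall>i\<ge>a. coeff r2 i = 0"
      using True less.prems by (auto intro!: coeff_eq_0)
    thus ?thesis by (intro exI[of _ 0]) simp
  next
    case False
    hence am: "a \<le> m" by simp
    define \<alpha>1 where "\<alpha>1 = coeff a1 a"
    define \<alpha>2 where "\<alpha>2 = coeff a2 a"
    define c1 where "c1 = coeff r1 m"
    define c2 where "c2 = coeff r2 m"
    define SS where "SS = \<alpha>1^2 + \<alpha>2^2"
    have SS: "SS \<noteq> 0" using S unfolding SS_def \<alpha>1_def \<alpha>2_def .
    define t1 where "t1 = (\<alpha>1*c1 + \<alpha>2*c2) / SS"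
    define t2 where "t2 = (\<alpha>1*c2 - \<alpha>2*c1) / SS"
    have e1: "\<alpha>1*t1 - \<alpha>2*t2 = c1"
    proof -
      have "\<alpha>1*t1 - \<alpha>2*t2 = (\<alpha>1*(\<alpha>1*c1 + \<alpha>2*c2) - \<alpha>2*(\<alpha>1*c2 - \<alpha>2*c1)) / SS"
        using SS unfolding t1_def t2_def by (simp add: field_simps)
      also have "\<alpha>1*(\<alpha>1*c1 + \<alpha>2*c2) - \<alpha>2*(\<alpha>1*c2 - \<alpha>2*c1) = SS * c1"
        unfolding SS_def by (simp add: algebra_simps power2_eq_square)
      finally show ?thesis using SS by simp
    qed
    have e2: "\<alpha>2*t1 + \<alpha>1*t2 = c2"
    proof -
      have "\<alpha>2*t1 + \<alpha>1*t2 = (\<alpha>2*(\<alpha>1*c1 + \<alpha>2*c2) + \<alpha>1*(\<alpha>1*c2 - \<alpha>2*c1)) / SS"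
        using SS unfolding t1_def t2_def by (simp add: field_simps)
      also have "\<alpha>2*(\<alpha>1*c1 + \<alpha>2*c2) + \<alpha>1*(\<alpha>1*c2 - \<alpha>2*c1) = SS * c2"
        unfolding SS_def by (simp add: algebra_simps power2_eq_square)
      finally show ?thesis using SS by simp
    qed
    define m1 where "m1 = monom t1 (m - a)"
    define m2 where "m2 = monom t2 (m - a)"
    define r1' where "r1' = r1 - (a1*m1 - a2*m2)"
    define r2' where "r2' = r2 - (a2*m1 + a1*m2)"
    have dm: "degree m1 \<le> m - a" "degree m2 \<le> m - a" unfolding m1_def m2_def by (simp_all add: degree_monom_le)
    have dp: "degree (x * y) \<le> m" if "degree x \<le> a" "degree y \<le> m - a" for x y :: "real poly"
      using degree_mult_le[of x y] that am by linarith
    have dr1': "degree r1' \<le> m" unfolding r1'_def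
      using less.prems dp[OF d1 dm(1)] dp[OF d2 dm(2)] by (intro degree_diff_le degree_diff_le) auto
    have dr2': "degree r2' \<le> m" unfolding r2'_def
      using less.prems dp[OF d2 dm(1)] dp[OF d1 dm(2)] by (intro degree_diff_le degree_add_le) auto
    have c1': "coeff r1' m = 0" unfolding r1'_def m1_def m2_def
      using e1 am by (simp add: coeff_mult_monom_top c1_def \<alpha>1_def \<alpha>2_def)
    have c2': "coeff r2' m = 0" unfolding r2'_def m1_def m2_def
      using e2 am by (simp add: coeff_mult_monom_top c2_def \<alpha>1_def \<alpha>2_def)
    show ?thesis
    proof (cases "m = 0")
      case True
      have z1: "\<forall>i. coeff r1' i = 0"
      proof
        fix i show "coeff r1' i = 0" using c1' dr1' True coeff_eq_0[of r1' i] by (cases "i = 0") auto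
      qed
      have z2: "\<forall>i. coeff r2' i = 0"
      proof
        fix i show "coeff r2' i = 0" using c2' dr2' True coeff_eq_0[of r2' i] by (cases "i = 0") auto
      qed
      show ?thesis
        using z1 z2 dm unfolding r1'_def r2'_def by blast
    next
      case False
      hence "m - 1 < m" "degree r1' \<le> m - 1" "degree r2' \<le> m - 1"
        using degree_le_pred dr1' dr2' c1' c2' by auto
      then obtain \<theta>1 \<theta>2 where th: "degree \<theta>1 \<le> m - 1 - a" "degree \<theta>2 \<le> m - 1 - a"
        "\<forall>i\<ge>a. coeff (r1' - (a1*\<theta>1 - a2*\<theta>2)) i = 0" "\<forall>i\<ge>a. coeff (r2' - (a2*\<theta>1 + a1*\<theta>2)) i = 0"
        using less.IH by blast
      have "r1 - (a1*(\<theta>1 + m1) - a2*(\<theta>2 + m2)) = r1' - (a1*\<theta>1 - a2*\<theta>2)"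
        unfolding r1'_def by (simp add: algebra_simps)
      moreover have "r2 - (a2*(\<theta>1 + m1) + a1*(\<theta>2 + m2)) = r2' - (a2*\<theta>1 + a1*\<theta>2)"
        unfolding r2'_def by (simp add: algebra_simps)
      moreover have "degree (\<theta>1 + m1) \<le> m - a" "degree (\<theta>2 + m2) \<le> m - a"
        using th(1,2) dm by (auto intro!: degree_add_le)
      ultimately show ?thesis using th(3,4)
        by (intro exI[of _ "\<theta>1 + m1"] exI[of _ "\<theta>2 + m2"]) simp
    qed
  qed
qed

lemma prod_span:
  fixes L :: "real poly \<Rightarrow> real"
  assumes Ladd: "\<forall>x y. L (x + y) = L x + L y"
    and H: "\<forall>\<psi> w. degree \<psi> \<le> m \<longrightarrow> degree w \<le> n \<longrightarrow> L (E * (\<psi> * w)) = 0"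
    and dz: "degree z \<le> m + n"
  shows "L (E * z) = 0"
proof -
  define zlo where "zlo = (\<Sum>i<m. monom (coeff z i) i)"
  define zhi where "zhi = (\<Sum>i\<le>n. monom (coeff z (i + m)) i)"
  have clo: "coeff zlo k = (if k < m then coeff z k else 0)" for k
    unfolding zlo_def by (simp add: coeff_sum)
  have chi: "coeff zhi k = (if k \<le> n then coeff z (k + m) else 0)" for k
    unfolding zhi_def by (simp add: coeff_sum)
  have dlo: "degree zlo \<le> m" by (rule degree_le) (simp add: clo)
  have dhi: "degree zhi \<le> n" by (rule degree_le) (simp add: chi)
  have z: "z = zlo * 1 + monom 1 m * zhi"
  proof (rule poly_eqI)
    fix k
    show "coeff z k = coeff (zlo * 1 + monom 1 m * zhi) k"
    proof (cases "k < m")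
      case True thus ?thesis by (simp add: clo coeff_monom_mult)
    next
      case False
      have "k - m > n \<Longrightarrow> coeff z k = 0" using dz coeff_eq_0[of z k] by linarith
      thus ?thesis using False by (auto simp: clo chi coeff_monom_mult)
    qed
  qed
  have "E * z = E * (zlo * 1) + E * (monom 1 m * zhi)" by (subst z) (simp add: algebra_simps)
  hence "L (E * z) = L (E * (zlo * 1)) + L (E * (monom 1 m * zhi))" using Ladd by simp
  also have "\<dots> = 0"
  proof -
    have "L (E * (zlo * 1)) = 0" by (rule H[rule_format]) (simp_all add: dlo)
    moreover have "L (E * (monom 1 m * zhi)) = 0" by (rule H[rule_format]) (simp_all add: dhi degree_monom_le)
    ultimately show ?thesis by simp
  qed
  finally show ?thesis .
qed



lemma deg_mult_leI:
  fixes p q :: "real poly"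
  shows "degree p \<le> m \<Longrightarrow> degree q \<le> n \<Longrightarrow> degree (p * q) \<le> m + n"
  using degree_mult_le[of p q] by linarith

lemma deg_sq_leI:
  fixes p :: "real poly"
  shows "degree p \<le> m \<Longrightarrow> degree (p^2) \<le> 2 * m"
  using deg_mult_leI[of p m p m] by (simp add: power2_eq_square)

lemma smult_sq: "(smult t (x::real poly))^2 = smult (t^2) (x^2)"
  by (simp add: power2_eq_square mult_smult_left mult_smult_right)

lemma sq_expand: "(smult t (x::real poly) + y)^2 = smult (t^2) (x^2) + smult t (x * y + x * y) + y^2"
proof -
  have "(smult t x + y)^2 = (smult t x + y) * (smult t x + y)" by (simp add: power2_eq_square)
  also have "\<dots> = smult t x * smult t x + (smult t x * y + smult t x * y) + y * y"
    by (simp add: distrib_left distrib_right mult.commute)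
  also have "smult t x * smult t x = smult (t^2) (x^2)" by (simp add: power2_eq_square)
  also have "smult t x * y + smult t x * y = smult t (x * y + x * y)" by (simp add: smult_add_right)
  finally show ?thesis by (simp add: power2_eq_square)
qed

lemma g1: fixes a1 a2 s g q1 q2 E :: "'a::comm_ring_1"
  shows "a1 * (a1 * s * g - q1 * E) - a2 * (-(a2 * s * g) - q2 * E) = s * (a1^2 + a2^2) * g - E * (a1 * q1 - a2 * q2)"
  by (simp add: algebra_simps power2_eq_square)
lemma g2: fixes a1 a2 s g q1 q2 E :: "'a::comm_ring_1"
  shows "a2 * (a1 * s * g - q1 * E) + a1 * (-(a2 * s * g) - q2 * E) = -(E * (a2 * q1 + a1 * q2))"
  by (simp add: algebra_simps)
lemma g3: fixes a1 a2 p q :: "'a::comm_ring_1"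
  shows "(a1^2 + a2^2) * p^2 + (a1^2 + a2^2) * q^2 = (a1 * p - a2 * q)^2 + (a2 * p + a1 * q)^2"
  by (simp add: algebra_simps power2_eq_square)
lemma g4: fixes g E r1 r2 :: "'a::comm_ring_1"
  shows "(g - E * r1)^2 + (E * r2)^2 = g^2 - E * (2 * g * r1 - E * (r1^2 + r2^2))"
  by (simp add: algebra_simps power2_eq_square)
lemma g5: fixes g a1 a2 p0 q0 E t1 t2 r :: "'a::comm_ring_1"
  assumes "g - (a1 * p0 - a2 * q0) = E * r"
  shows "g = (a1 * (p0 + E * t1) - a2 * (q0 + E * t2)) + E * (r - (a1 * t1 - a2 * t2))"
proof -
  have "g = (a1 * p0 - a2 * q0) + E * r" using assms by (simp add: algebra_simps)
  thus ?thesis by (simp add: algebra_simps)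
qed
lemma g6: fixes a1 a2 p0 q0 E t1 t2 r :: "'a::comm_ring_1"
  assumes "a2 * p0 + a1 * q0 = -(E * r)"
  shows "a2 * (p0 + E * t1) + a1 * (q0 + E * t2) = -(E * (r - (a2 * t1 + a1 * t2)))"
proof -
  have "a2 * (p0 + E * t1) + a1 * (q0 + E * t2) = (a2 * p0 + a1 * q0) + E * (a2 * t1 + a1 * t2)" by (simp add: algebra_simps)
  thus ?thesis using assms by (simp add: algebra_simps)
qed
lemma g7: fixes x g t E y :: "'a::comm_ring_1"
  assumes "x = g - t * E * g - E * y" shows "g - x = E * (t * g + y)"
  using assms by (simp add: algebra_simps)

lemma main_alg:
  fixes L :: "real poly \<Rightarrow> real" and Nq :: "real poly \<Rightarrow> real" and u1 u2 :: "real poly" and d :: nat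
  assumes Ladd: "\<forall>x y. L (x + y) = L x + L y"
    and Lsm: "\<forall>c x. L (smult c x) = c * L x"
    and du1: "degree u1 \<le> d" and du2: "degree u2 \<le> d"
    and H1: "\<forall>v. degree v \<le> d \<longrightarrow> L (u1 * v) = 0 \<and> L (u2 * v) = 0"
    and H2: "\<forall>v1 v2. degree v1 \<le> d \<longrightarrow> degree v2 \<le> d \<longrightarrow>
               0 \<le> 2 * Nq (u1* v1 + u2* v2) + L (v1^2) + L (v2^2)"
  shows "\<forall>g. degree g \<le> d \<longrightarrow> L (g^2) \<ge> 0"
proof -
  have L0: "L 0 = 0" using Lsm[rule_format, of 0 0] by simp
  have Lneg: "L (- x) = - L x" for x using Lsm[rule_format, of "-1" x] by simp
  have Ldiff: "L (x - y) = L x - L y" for x y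
    using Ladd[rule_format, of x "- y"] Lneg[of y] by simp
  have La: "L (x + y) = L x + L y" for x y using Ladd by simp
  have Ls: "L (smult c x) = c * L x" for c x using Lsm by simp
  have Qexp: "0 \<le> (2 * Nq (u1 * y1 + u2 * y2) + L (y1^2) + L (y2^2)) + t * (2 * L (X1 * y1 + X2 * y2))
      + t^2 * L (X1^2 + X2^2)"
    if "degree X1 \<le> d" "degree X2 \<le> d" "degree y1 \<le> d" "degree y2 \<le> d" "u1 * X1 + u2 * X2 = 0"
    for X1 X2 y1 y2 t
  proof -
    have d1: "degree (smult t X1 + y1) \<le> d" using that by (intro degree_add_le) (auto simp: degree_smult_le order_trans[OF degree_smult_le])
    have d2: "degree (smult t X2 + y2) \<le> d" using that by (intro degree_add_le) (auto simp: order_trans[OF degree_smult_le])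
    have "u1 * (smult t X1 + y1) + u2 * (smult t X2 + y2) = smult t (u1 * X1 + u2 * X2) + (u1 * y1 + u2 * y2)"
      by (simp add: algebra_simps smult_add_right mult_smult_right)
    hence uu: "u1 * (smult t X1 + y1) + u2 * (smult t X2 + y2) = u1 * y1 + u2 * y2" using that(5) by simp
    have "0 \<le> 2 * Nq (u1 * (smult t X1 + y1) + u2 * (smult t X2 + y2)) + L ((smult t X1 + y1)^2) + L ((smult t X2 + y2)^2)"
      using H2 d1 d2 by blast
    also have "\<dots> = (2 * Nq (u1 * y1 + u2 * y2) + L (y1^2) + L (y2^2)) + t * (2 * L (X1 * y1 + X2 * y2))
      + t^2 * L (X1^2 + X2^2)"
      unfolding uu sq_expand La Ls by (simp add: algebra_simps)
    finally show ?thesis .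
  qed
  show ?thesis
  proof (cases "u1 = 0 \<and> u2 = 0")
    case True
    show ?thesis
    proof (intro allI impI)
      fix g :: "real poly" assume dg: "degree g \<le> d"
      have "\<forall>t. 0 \<le> (2 * Nq (u1 * 0 + u2 * 0) + L (0^2) + L (0^2)) + t * (2 * L (g * 0 + 0 * 0)) + t^2 * L (g^2 + 0^2)"
        using Qexp[of g 0 0 0] dg True by simp
      hence "\<forall>t. 0 \<le> 2 * Nq 0 + t^2 * L (g^2)" by (simp add: L0 add.commute)
      thus "L (g^2) \<ge> 0" by (rule quad_nonneg)
    qed
  next
    case False
    define D where "D = gcd u1 u2"
    have Dnz: "D \<noteq> 0" using False unfolding D_def by simp
    define a1 where "a1 = u1 div D"
    define a2 where "a2 = u2 div D"
    have u1D: "u1 = D * a1" unfolding a1_def D_def by simp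
    have u2D: "u2 = D * a2" unfolding a2_def D_def by simp
    have cop: "coprime a1 a2" unfolding a1_def a2_def D_def using False by (intro div_gcd_coprime) auto
    have anz: "a1 \<noteq> 0 \<or> a2 \<noteq> 0" using False u1D u2D by auto
    define a where "a = max (degree a1) (degree a2)"
    define \<delta> where "\<delta> = degree D"
    have da1: "degree a1 \<le> a" and da2: "degree a2 \<le> a" unfolding a_def by auto
    have dd1: "a1 \<noteq> 0 \<Longrightarrow> \<delta> + degree a1 \<le> d" using du1 u1D Dnz unfolding \<delta>_def by (simp add: degree_mult_eq)
    have dd2: "a2 \<noteq> 0 \<Longrightarrow> \<delta> + degree a2 \<le> d" using du2 u2D Dnz unfolding \<delta>_def by (simp add: degree_mult_eq)
    have ad: "a + \<delta> \<le> d" using dd1 dd2 anz unfolding a_def by (cases "a1 = 0"; cases "a2 = 0") (auto simp: max_def)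
    define k where "k = d - a - \<delta>"
    define \<sigma> where "\<sigma> = a1^2 + a2^2"
    have d\<sigma>: "degree \<sigma> \<le> 2 * a" unfolding \<sigma>_def using deg_sq_leI[OF da1] deg_sq_leI[OF da2]
      by (intro degree_add_le) auto
    have lc: "coeff a1 a ^2 + coeff a2 a ^2 \<noteq> 0"
    proof (cases "a1 \<noteq> 0 \<and> degree a1 = a")
      case True
      hence "coeff a1 a \<noteq> 0" by auto
      thus ?thesis by (simp add: add_nonneg_eq_0_iff)
    next
      case F: False
      have "a2 \<noteq> 0 \<and> degree a2 = a"
      proof (cases "a1 = 0")
        case True thus ?thesis using anz unfolding a_def by simp
      next
        case False thus ?thesis using F anz unfolding a_def by (auto simp: max_def split: if_splits)
      qed
      hence "coeff a2 a \<noteq> 0" by auto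
      thus ?thesis by (simp add: add_nonneg_eq_0_iff)
    qed
    have syz: "u1 * (-(a2 * \<phi>)) + u2 * (a1 * \<phi>) = 0" for \<phi> unfolding u1D u2D by (simp add: algebra_simps)
    have syzsq: "(-(a2 * \<phi>))^2 + (a1 * \<phi>)^2 = \<sigma> * \<phi>^2" for \<phi> unfolding \<sigma>_def by (simp add: algebra_simps power2_eq_square)
    have syzsq': "(a1 * \<phi>)^2 + (a2 * \<phi>)^2 = \<sigma> * \<phi>^2" "(a2 * \<phi>)^2 + (a1 * \<phi>)^2 = \<sigma> * \<phi>^2" for \<phi>
      unfolding \<sigma>_def by (simp_all add: algebra_simps power2_eq_square)
    have dX: "degree (a2 * \<phi>) \<le> d" "degree (a1 * \<phi>) \<le> d" if "degree \<phi> \<le> d - a" for \<phi>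
      using deg_mult_leI[OF da2 that] deg_mult_leI[OF da1 that] ad by auto
    have A: "L (\<sigma> * \<phi>^2) \<ge> 0" if "degree \<phi> \<le> d - a" for \<phi>
    proof -
      have "\<forall>t. 0 \<le> (2 * Nq (u1 * 0 + u2 * 0) + L (0^2) + L (0^2)) + t * (2 * L ((-(a2 * \<phi>)) * 0 + (a1 * \<phi>) * 0))
        + t^2 * L ((-(a2 * \<phi>))^2 + (a1 * \<phi>)^2)"
        using Qexp[of "-(a2 * \<phi>)" "a1 * \<phi>" 0 0] dX[OF that] syz by simp
      hence "\<forall>t. 0 \<le> 2 * Nq 0 + t^2 * L (\<sigma> * \<phi>^2)" by (simp add: L0 syzsq syzsq' add.commute)
      thus ?thesis by (rule quad_nonneg)
    qed
    have B: "L (\<phi> * w) = 0" if "degree \<phi> \<le> d - a" "L (\<sigma> * \<phi>^2) = 0" "degree w \<le> d + a" for \<phi> w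
    proof -
      note dw = that(3)
      have "a \<le> d + 1" using ad by simp
      then obtain y1 y2 where y: "degree y1 \<le> d" "degree y2 \<le> d" "a1 * y1 + a2 * y2 = w"
        using span2[OF cop anz a_def, of d w] dw by (auto simp: add.commute)
      have "\<forall>t. 0 \<le> (2 * Nq (u1 * (-y2) + u2 * y1) + L ((-y2)^2) + L (y1^2)) + t * (2 * L ((-(a2 * \<phi>)) * (-y2) + (a1 * \<phi>) * y1))
        + t^2 * L ((-(a2 * \<phi>))^2 + (a1 * \<phi>)^2)"
        using Qexp[of "-(a2 * \<phi>)" "a1 * \<phi>" "-y2" y1] dX[OF that(1)] syz y by simp
      hence "\<forall>t. 0 \<le> (2 * Nq (u1 * (-y2) + u2 * y1) + L ((-y2)^2) + L (y1^2)) + t * (2 * L ((-(a2 * \<phi>)) * (-y2) + (a1 * \<phi>) * y1))"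
        using that(2) by (simp add: syzsq syzsq')
      hence "2 * L ((-(a2 * \<phi>)) * (-y2) + (a1 * \<phi>) * y1) = 0" by (rule lin_zero)
      moreover have "(-(a2 * \<phi>)) * (-y2) + (a1 * \<phi>) * y1 = \<phi> * (a1 * y1 + a2 * y2)" by (simp add: algebra_simps)
      hence "(-(a2 * \<phi>)) * (-y2) + (a1 * \<phi>) * y1 = \<phi> * w" using y(3) by simp
      ultimately show ?thesis by simp
    qed
    have Init: "L (D * w) = 0" if "degree w \<le> d + a" for w
    proof -
      note dw = that
      have "a \<le> d + 1" using ad by simp
      then obtain y1 y2 where y: "degree y1 \<le> d" "degree y2 \<le> d" "a1 * y1 + a2 * y2 = w"
        using span2[OF cop anz a_def, of d w] dw by (auto simp: add.commute)
      have "D * w = u1 * y1 + u2 * y2" unfolding u1D u2D y(3)[symmetric] by (simp add: algebra_simps)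
      thus ?thesis using H1 y La by simp
    qed
    define Inv where "Inv E \<longleftrightarrow> E \<noteq> 0 \<and> degree E \<le> \<delta> \<and> (\<forall>z. degree z \<le> 2 * d - k - degree E \<longrightarrow> L (E * z) = 0)" for E
    have InvD: "Inv D" unfolding Inv_def using Dnz Init ad unfolding k_def \<delta>_def[symmetric] by auto
    have eD: "\<delta> \<le> d - a" using ad by simp
    have kdef: "k + a + \<delta> = d" unfolding k_def using ad by simp
    have Term: "L (g^2) \<ge> 0" if IE: "Inv E" and copE: "coprime \<sigma> E" and dg: "degree g \<le> d" for E g
    proof -
      define e where "e = degree E"
      have Enz: "E \<noteq> 0" and ee: "e \<le> \<delta>" and EL: "\<And>z. degree z \<le> 2 * d - k - e \<Longrightarrow> L (E * z) = 0"
        using IE unfolding Inv_def e_def by auto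
      obtain s t where st: "s * \<sigma> + t * E = 1" using coprime_bezout_poly[OF copE] by blast
      define \<phi>10 where "\<phi>10 = (a1 * s * g) mod E"
      define \<phi>20 where "\<phi>20 = (-(a2 * s * g)) mod E"
      define q1 where "q1 = (a1 * s * g) div E"
      define q2 where "q2 = (-(a2 * s * g)) div E"
      have \<phi>10: "\<phi>10 = a1 * s * g - q1 * E"
        using div_mult_mod_eq[of "a1 * s * g" E] unfolding \<phi>10_def q1_def by (simp add: eq_diff_eq add.commute)
      have \<phi>20: "\<phi>20 = -(a2 * s * g) - q2 * E"
        using div_mult_mod_eq[of "-(a2 * s * g)" E] unfolding \<phi>20_def q2_def by (simp add: eq_diff_eq add.commute)
      have aux: "degree x \<le> d - a" if "x = 0 \<or> degree x < degree E" for x :: "real poly"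
        using that ee eD unfolding e_def by auto
      have d\<phi>0: "degree \<phi>10 \<le> d - a" "degree \<phi>20 \<le> d - a"
        unfolding \<phi>10_def \<phi>20_def using aux degree_mod_less'[OF Enz] by blast+
      define r10 where "r10 = t * g + (a1 * q1 - a2 * q2)"
      define r20 where "r20 = a2 * q1 + a1 * q2"
      have st': "s * \<sigma> = 1 - t * E" using st by (simp add: eq_diff_eq)
      have ssig: "s * \<sigma> * g = g - t * E * g" unfolding st' by (simp add: algebra_simps)
      have "a1 * \<phi>10 - a2 * \<phi>20 = s * \<sigma> * g - E * (a1 * q1 - a2 * q2)"
        unfolding \<phi>10 \<phi>20 \<sigma>_def by (rule g1)
      hence eq1: "g - (a1 * \<phi>10 - a2 * \<phi>20) = E * r10" unfolding ssig r10_def by (rule g7)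
      have eq2: "a2 * \<phi>10 + a1 * \<phi>20 = -(E * r20)"
        unfolding \<phi>10 \<phi>20 r20_def by (rule g2)
      have dA0: "degree (a1 * \<phi>10 - a2 * \<phi>20) \<le> d" "degree (a2 * \<phi>10 + a1 * \<phi>20) \<le> d"
        using deg_mult_leI[OF da1 d\<phi>0(1)] deg_mult_leI[OF da2 d\<phi>0(2)]
          deg_mult_leI[OF da2 d\<phi>0(1)] deg_mult_leI[OF da1 d\<phi>0(2)] ad
        by (auto intro!: degree_diff_le degree_add_le)
      have dEr: "degree r \<le> d - e" if "degree (E * r) \<le> d" for r
      proof (cases "r = 0")
        case True thus ?thesis by simp
      next
        case False thus ?thesis using that degree_mult_eq[OF Enz False] unfolding e_def by simp
      qed
      have "degree (E * r10) \<le> d" unfolding eq1[symmetric] using dg dA0(1) by (rule degree_diff_le)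
      hence dr10: "degree r10 \<le> d - e" by (rule dEr)
      have "E * r10 = g - (a1 * \<phi>10 - a2 * \<phi>20)" using eq1 by simp
      have "E * r20 = - (a2 * \<phi>10 + a1 * \<phi>20)" using eq2 by simp
      hence "degree (E * r20) \<le> d" using dA0(2) by (simp only: degree_minus)
      hence dr20: "degree r20 \<le> d - e" by (rule dEr)
      obtain \<theta>1 \<theta>2 where th: "degree \<theta>1 \<le> d - e - a" "degree \<theta>2 \<le> d - e - a"
        "\<forall>i\<ge>a. coeff (r10 - (a1 * \<theta>1 - a2 * \<theta>2)) i = 0" "\<forall>i\<ge>a. coeff (r20 - (a2 * \<theta>1 + a1 * \<theta>2)) i = 0"
        using cdiv[OF lc da1 da2 dr10 dr20] by blast
      define \<rho>1 where "\<rho>1 = r10 - (a1 * \<theta>1 - a2 * \<theta>2)"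
      define \<rho>2 where "\<rho>2 = r20 - (a2 * \<theta>1 + a1 * \<theta>2)"
      have ia: "i \<ge> a" if "i > d - e - k" for i using that ee kdef by linarith
      have d\<rho>1: "degree \<rho>1 \<le> d - e - k"
      proof (rule degree_le, intro allI impI)
        fix i assume "d - e - k < i"
        thus "coeff \<rho>1 i = 0" using th(3) ia unfolding \<rho>1_def by blast
      qed
      have d\<rho>2: "degree \<rho>2 \<le> d - e - k"
      proof (rule degree_le, intro allI impI)
        fix i assume "d - e - k < i"
        thus "coeff \<rho>2 i = 0" using th(4) ia unfolding \<rho>2_def by blast
      qed
      note d\<rho> = d\<rho>1 d\<rho>2
      define \<phi>1 where "\<phi>1 = \<phi>10 + E * \<theta>1"
      define \<phi>2 where "\<phi>2 = \<phi>20 + E * \<theta>2"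
      have dE\<theta>: "degree (E * \<theta>1) \<le> d - a" "degree (E * \<theta>2) \<le> d - a"
        using deg_mult_leI[of E e \<theta>1 "d - e - a"] deg_mult_leI[of E e \<theta>2 "d - e - a"] th(1,2) ee eD
        unfolding e_def by auto
      have d\<phi>: "degree \<phi>1 \<le> d - a" "degree \<phi>2 \<le> d - a"
        unfolding \<phi>1_def \<phi>2_def using d\<phi>0 dE\<theta> by (auto intro!: degree_add_le)
      have EQ1: "g = (a1 * \<phi>1 - a2 * \<phi>2) + E * \<rho>1"
        unfolding \<phi>1_def \<phi>2_def \<rho>1_def by (rule g5[OF eq1])
      have EQ2: "a2 * \<phi>1 + a1 * \<phi>2 = -(E * \<rho>2)"
        unfolding \<phi>1_def \<phi>2_def \<rho>2_def by (rule g6[OF eq2])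
      define z where "z = 2 * g * \<rho>1 - E * (\<rho>1^2 + \<rho>2^2)"
      have ss: "\<sigma> * \<phi>1^2 + \<sigma> * \<phi>2^2 = (a1 * \<phi>1 - a2 * \<phi>2)^2 + (a2 * \<phi>1 + a1 * \<phi>2)^2"
        unfolding \<sigma>_def by (rule g3)
      have X: "a1 * \<phi>1 - a2 * \<phi>2 = g - E * \<rho>1" using EQ1 by (simp add: eq_diff_eq)
      have ident0: "\<sigma> * \<phi>1^2 + \<sigma> * \<phi>2^2 = g^2 - E * z"
        unfolding ss X EQ2 z_def power2_minus by (rule g4)
      have ident: "g^2 = \<sigma> * \<phi>1^2 + \<sigma> * \<phi>2^2 + E * z" unfolding ident0 by simp
      have dz: "degree z \<le> 2 * d - k - e"
      proof -
        have "2 * g = g + g" by (rule mult_2)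
        hence "degree (2 * g) \<le> d" using dg degree_add_le[of g d g] by simp
        hence "degree (2 * g * \<rho>1) \<le> d + (d - e - k)" using deg_mult_leI[OF _ d\<rho>(1)] by blast
        moreover have s2: "degree (\<rho>1^2 + \<rho>2^2) \<le> 2 * (d - e - k)"
          using deg_sq_leI[OF d\<rho>(1)] deg_sq_leI[OF d\<rho>(2)] by (rule degree_add_le)
        hence "degree (E * (\<rho>1^2 + \<rho>2^2)) \<le> e + 2 * (d - e - k)"
          using deg_mult_leI[of E e] unfolding e_def by blast
        moreover have "d + (d - e - k) \<le> 2 * d - k - e" "e + 2 * (d - e - k) \<le> 2 * d - k - e"
          using ee kdef by linarith+
        ultimately have "degree (2 * g * \<rho>1) \<le> 2 * d - k - e" "degree (E * (\<rho>1^2 + \<rho>2^2)) \<le> 2 * d - k - e"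
          by linarith+
        thus ?thesis unfolding z_def by (rule degree_diff_le)
      qed
      have l1: "L (g^2) = L (\<sigma> * \<phi>1^2 + \<sigma> * \<phi>2^2 + E * z)" using ident by (rule arg_cong)
      have l2: "L (\<sigma> * \<phi>1^2 + \<sigma> * \<phi>2^2 + E * z) = L (\<sigma> * \<phi>1^2) + L (\<sigma> * \<phi>2^2) + L (E * z)"
        by (simp only: La)
      have l3: "L (E * z) = 0" using EL[OF dz] .
      show ?thesis using l1 l2 l3 A[OF d\<phi>(1)] A[OF d\<phi>(2)] by linarith
    qed
    have Step: "\<exists>E1. Inv E1 \<and> degree E1 < degree E" if IE: "Inv E" and ncop: "\<not> coprime \<sigma> E" for E
    proof -
      define e where "e = degree E"
      have Enz: "E \<noteq> 0" and ee: "e \<le> \<delta>" and EL: "\<And>z. degree z \<le> 2 * d - k - e \<Longrightarrow> L (E * z) = 0"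
        using IE unfolding Inv_def e_def by auto
      define G where "G = gcd \<sigma> E"
      have Gnz: "G \<noteq> 0" unfolding G_def using Enz by simp
      have "\<not> is_unit G" unfolding G_def using ncop by (simp only: is_unit_gcd not_False_eq_True)
      hence dG: "degree G > 0" using is_unit_iff_degree[OF Gnz] by simp
      define E1 where "E1 = E div G"
      define \<sigma>1 where "\<sigma>1 = \<sigma> div G"
      have EG: "E = G * E1" unfolding E1_def G_def by simp
      have sG: "\<sigma> = G * \<sigma>1" unfolding \<sigma>1_def G_def by simp
      have E1nz: "E1 \<noteq> 0" using Enz EG by auto
      have deE: "e = degree G + degree E1" unfolding e_def EG using degree_mult_eq[OF Gnz E1nz] .
      define e1 where "e1 = degree E1"
      define M where "M = d - a - e1 - k"
      have Mdef: "M + a + e1 + k = d" unfolding M_def using deE ee kdef dG unfolding e1_def by linarith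
      have H: "L (E1 * (\<psi> * w)) = 0" if d\<psi>: "degree \<psi> \<le> M" and dw: "degree w \<le> d + a" for \<psi> w
      proof -
        define \<phi> where "\<phi> = E1 * \<psi>"
        have d\<phi>: "degree \<phi> \<le> d - a" unfolding \<phi>_def using deg_mult_leI[of E1 e1 \<psi> M] d\<psi> Mdef unfolding e1_def by auto
        have "\<sigma> * \<phi>^2 = E * (\<sigma>1 * E1 * \<psi>^2)" unfolding \<phi>_def EG by (subst sG) (simp add: algebra_simps power2_eq_square)
        moreover have "degree (\<sigma>1 * E1 * \<psi>^2) \<le> 2 * d - k - e"
        proof (cases "\<sigma>1 = 0")
          case True thus ?thesis by simp
        next
          case False
          have "\<sigma> \<noteq> 0" using False sG Gnz by simp
          hence "degree G + degree \<sigma>1 \<le> 2 * a" using d\<sigma> sG degree_mult_eq[OF Gnz False] by simp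
          moreover have "degree (\<sigma>1 * E1 * \<psi>^2) \<le> degree \<sigma>1 + e1 + 2 * M"
            using deg_mult_leI[OF deg_mult_leI[of \<sigma>1 "degree \<sigma>1" E1 e1] deg_sq_leI[OF d\<psi>]] unfolding e1_def by simp
          ultimately show ?thesis using Mdef deE unfolding e1_def by linarith
        qed
        ultimately have "L (\<sigma> * \<phi>^2) = 0" using EL by simp
        hence "L (\<phi> * w) = 0" using B[OF d\<phi> _ dw] by simp
        thus ?thesis unfolding \<phi>_def by (simp add: mult.assoc)
      qed
      have "L (E1 * z) = 0" if "degree z \<le> 2 * d - k - e1" for z
        using prod_span[OF Ladd, of M "d + a" E1 z] H that Mdef by auto
      hence "Inv E1" unfolding Inv_def e1_def using E1nz deE ee by auto
      moreover have "degree E1 < degree E" using deE dG unfolding e_def by simp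
      ultimately show ?thesis by blast
    qed
    have Ind: "\<forall>E. degree E = n \<longrightarrow> Inv E \<longrightarrow> (\<forall>g. degree g \<le> d \<longrightarrow> L (g^2) \<ge> 0)" for n
    proof (induction n rule: less_induct)
      case (less n)
      show ?case
      proof (intro allI impI)
        fix E g :: "real poly" assume dE: "degree E = n" and IE: "Inv E" and dg: "degree g \<le> d"
        show "L (g^2) \<ge> 0"
        proof (cases "coprime \<sigma> E")
          case True show ?thesis using Term[OF IE True dg] .
        next
          case False
          then obtain E1 where "Inv E1" "degree E1 < degree E" using Step[OF IE] by blast
          thus ?thesis using less.IH dE dg by blast
        qed
      qed
    qed
    show ?thesis using Ind InvD by blast
  qed
qed



lemma bforms_iff: "x \<in> bforms n \<longleftrightarrow> degree x \<le> n" by (simp add: bforms_def)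

lemma bforms_add [simp]: "x \<in> bforms n \<Longrightarrow> y \<in> bforms n \<Longrightarrow> x + y \<in> bforms n"
  by (simp add: bforms_def degree_add_le)
lemma bforms_diff [simp]: "x \<in> bforms n \<Longrightarrow> y \<in> bforms n \<Longrightarrow> x - y \<in> bforms n"
  by (simp add: bforms_def degree_diff_le)
lemma bforms_smult [simp]: "x \<in> bforms n \<Longrightarrow> smult c x \<in> bforms n"
  by (simp add: bforms_def order_trans[OF degree_smult_le])
lemma bforms_mult: "x \<in> bforms n \<Longrightarrow> y \<in> bforms m \<Longrightarrow> x * y \<in> bforms (n + m)"
  by (simp add: bforms_def deg_mult_leI)
lemma bforms_mult2 [simp]: "x \<in> bforms d \<Longrightarrow> y \<in> bforms d \<Longrightarrow> x * y \<in> bforms (2 * d)"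
  using bforms_mult[of x d y d] by (simp add: mult_2)
lemma bforms_sq [simp]: "x \<in> bforms d \<Longrightarrow> x^2 \<in> bforms (2 * d)"
  using bforms_mult2[of x d x] by (simp add: power2_eq_square)
lemma bforms_zero [simp]: "0 \<in> bforms n" by (simp add: bforms_def)

locale ipsp =
  fixes ip :: "real poly \<Rightarrow> real poly \<Rightarrow> real" and n :: nat
  assumes IP: "inner_prod_on (bforms n) ip"
begin

lemma sym: "x \<in> bforms n \<Longrightarrow> y \<in> bforms n \<Longrightarrow> ip x y = ip y x"
  using IP[unfolded inner_prod_on_def, THEN conjunct1] by blast
lemma addL: "x \<in> bforms n \<Longrightarrow> y \<in> bforms n \<Longrightarrow> z \<in> bforms n \<Longrightarrow> ip (x + y) z = ip x z + ip y z"
  using IP[unfolded inner_prod_on_def, THEN conjunct2, THEN conjunct1] by blast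
lemma smultL: "x \<in> bforms n \<Longrightarrow> y \<in> bforms n \<Longrightarrow> ip (smult c x) y = c * ip x y"
  using IP[unfolded inner_prod_on_def, THEN conjunct2, THEN conjunct2, THEN conjunct1] by blast
lemma pos: "x \<in> bforms n \<Longrightarrow> x \<noteq> 0 \<Longrightarrow> ip x x > 0"
  using IP[unfolded inner_prod_on_def, THEN conjunct2, THEN conjunct2, THEN conjunct2] by blast
lemma addR:
  assumes X: "x \<in> bforms n" and Y: "y \<in> bforms n" and Z: "z \<in> bforms n"
  shows "ip z (x + y) = ip z x + ip z y"
proof -
  have XY: "x + y \<in> bforms n" using X Y by simp
  have "ip z (x + y) = ip (x + y) z" by (rule sym[OF Z XY])
  also have "\<dots> = ip x z + ip y z" by (rule addL[OF X Y Z])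
  also have "ip x z = ip z x" by (rule sym[OF X Z])
  also have "ip y z = ip z y" by (rule sym[OF Y Z])
  finally show ?thesis .
qed
lemma smultR:
  assumes X: "x \<in> bforms n" and Y: "y \<in> bforms n"
  shows "ip y (smult c x) = c * ip y x"
proof -
  have CX: "smult c x \<in> bforms n" using X by simp
  have "ip y (smult c x) = ip (smult c x) y" by (rule sym[OF Y CX])
  also have "\<dots> = c * ip x y" by (rule smultL[OF X Y])
  also have "ip x y = ip y x" by (rule sym[OF X Y])
  finally show ?thesis .
qed
lemma zeroL: "y \<in> bforms n \<Longrightarrow> ip 0 y = 0"
  using smultL[of 0 y 0] by simp
lemma nonneg: "x \<in> bforms n \<Longrightarrow> ip x x \<ge> 0"
proof (cases "x = 0")
  case True
  assume "x \<in> bforms n"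
  thus ?thesis using True zeroL[of 0] by simp
next
  case False
  assume "x \<in> bforms n"
  thus ?thesis using False pos[of x] by simp
qed
lemma diffL:
  assumes X: "x \<in> bforms n" and Y: "y \<in> bforms n" and Z: "z \<in> bforms n"
  shows "ip (x - y) z = ip x z - ip y z"
proof -
  have "ip x z = ip ((x - y) + y) z" by simp
  also have "\<dots> = ip (x - y) z + ip y z" using X Y Z by (intro addL) simp_all
  finally show ?thesis by simp
qed
lemma diffR:
  assumes X: "x \<in> bforms n" and Y: "y \<in> bforms n" and Z: "z \<in> bforms n"
  shows "ip z (x - y) = ip z x - ip z y"
proof -
  have XY: "x - y \<in> bforms n" using X Y by simp
  have "ip z (x - y) = ip (x - y) z" by (rule sym[OF Z XY])
  also have "\<dots> = ip x z - ip y z" by (rule diffL[OF X Y Z])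
  also have "ip x z = ip z x" by (rule sym[OF X Z])
  also have "ip y z = ip z y" by (rule sym[OF Y Z])
  finally show ?thesis .
qed

lemma expand3:
  assumes X: "x \<in> bforms n" and Y: "y \<in> bforms n" and Z: "z \<in> bforms n"
  shows "ip (x + smult s y + smult t z) (x + smult s y + smult t z) =
    ip x x + 2 * s * ip x y + 2 * t * ip x z + s^2 * ip y y + 2 * s * t * ip y z + t^2 * ip z z"
proof -
  have yx: "ip y x = ip x y" by (rule sym[OF Y X])
  have zx: "ip z x = ip x z" by (rule sym[OF Z X])
  have zy: "ip z y = ip y z" by (rule sym[OF Z Y])
  define W where "W = x + smult s y + smult t z"
  have sy: "smult s y \<in> bforms n" and tz: "smult t z \<in> bforms n" using Y Z by simp_all
  have xsy: "x + smult s y \<in> bforms n" using X sy by simp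
  have WV: "W \<in> bforms n" unfolding W_def using xsy tz by simp
  have e1: "ip W W = ip x W + s * ip y W + t * ip z W"
  proof -
    have "ip W W = ip (x + smult s y) W + ip (smult t z) W" unfolding W_def[of] using addL[OF xsy tz] WV W_def by simp
    also have "ip (x + smult s y) W = ip x W + ip (smult s y) W" using addL[OF X sy WV] .
    also have "ip (smult s y) W = s * ip y W" using smultL[OF Y WV] .
    also have "ip (smult t z) W = t * ip z W" using smultL[OF Z WV] .
    finally show ?thesis by simp
  qed
  have eR: "ip v W = ip v x + s * ip v y + t * ip v z" if V: "v \<in> bforms n" for v
  proof -
    have "ip v W = ip v (x + smult s y) + ip v (smult t z)" unfolding W_def using addR[OF xsy tz V] .
    also have "ip v (x + smult s y) = ip v x + ip v (smult s y)" using addR[OF X sy V] .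
    also have "ip v (smult s y) = s * ip v y" using smultR[OF Y V] .
    also have "ip v (smult t z) = t * ip v z" using smultR[OF Z V] .
    finally show ?thesis by simp
  qed
  have "ip W W = ip x x + 2 * s * ip x y + 2 * t * ip x z + s^2 * ip y y + 2 * s * t * ip y z + t^2 * ip z z"
    unfolding e1 eR[OF X] eR[OF Y] eR[OF Z] yx zx zy by (simp add: power2_eq_square algebra_simps)
  thus ?thesis unfolding W_def .
qed

end

definition trunc :: "nat \<Rightarrow> real poly \<Rightarrow> real poly" where
  "trunc n q = (\<Sum>i\<le>n. monom (coeff q i) i)"

lemma coeff_trunc: "coeff (trunc n q) k = (if k \<le> n then coeff q k else 0)"
  unfolding trunc_def by (simp add: coeff_sum)
lemma trunc_id: "degree q \<le> n \<Longrightarrow> trunc n q = q"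
  unfolding trunc_def by (rule poly_as_sum_of_monoms')
lemma trunc_add: "trunc n (x + y) = trunc n x + trunc n y"
  by (rule poly_eqI) (simp add: coeff_trunc)
lemma trunc_smult: "trunc n (smult c x) = smult c (trunc n x)"
  by (rule poly_eqI) (simp add: coeff_trunc)
lemma trunc_bforms: "trunc n q \<in> bforms n"
  unfolding bforms_def by (auto intro!: degree_le simp: coeff_trunc)

lemma deriv_quartic:
  fixes c0 c1 c2 c3 c4 :: real
  shows "deriv (\<lambda>t. c0 + c1 * t + c2 * t^2 + c3 * t^3 + c4 * t^4) = (\<lambda>t. c1 + 2 * c2 * t + 3 * c3 * t^2 + 4 * c4 * t^3)"
proof
  fix t :: real
  have "((\<lambda>t. c0 + c1 * t + c2 * t^2 + c3 * t^3 + c4 * t^4) has_real_derivative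
     c1 + 2 * c2 * t + 3 * c3 * t^2 + 4 * c4 * t^3) (at t)"
    apply (rule derivative_eq_intros refl | simp)+
    done
  thus "deriv (\<lambda>t. c0 + c1 * t + c2 * t^2 + c3 * t^3 + c4 * t^4) t = c1 + 2 * c2 * t + 3 * c3 * t^2 + 4 * c4 * t^3"
    by (rule DERIV_imp_deriv)
qed

lemma deriv_cubic:
  fixes c1 c2 c3 c4 :: real
  shows "deriv (\<lambda>t. c1 + 2 * c2 * t + 3 * c3 * t^2 + 4 * c4 * t^3) 0 = 2 * c2"
proof -
  have "((\<lambda>t. c1 + 2 * c2 * t + 3 * c3 * t^2 + 4 * c4 * t^3) has_real_derivative 2 * c2) (at 0)"
    apply (rule derivative_eq_intros refl | simp)+
    done
  thus ?thesis by (rule DERIV_imp_deriv)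
qed

lemma sq_expand2: "(x + smult t (y::real poly))^2 = x^2 + smult t (x * y + x * y) + smult (t^2) (y^2)"
  using sq_expand[of t y x] by (simp add: algebra_simps)


lemma W_ident:
  fixes u1 u2 v1 v2 p :: "real poly"
  shows "(u1 + smult t v1)^2 + (u2 + smult t v2)^2 - p =
    (u1^2 + u2^2 - p) + smult t ((u1 * v1 + u2 * v2) + (u1 * v1 + u2 * v2)) + smult (t^2) (v1^2 + v2^2)"
proof -
  have "(u1 + smult t v1)^2 + (u2 + smult t v2)^2 - p =
     (u1^2 + smult t (u1 * v1 + u1 * v1) + smult (t^2) (v1^2)) + (u2^2 + smult t (u2 * v2 + u2 * v2) + smult (t^2) (v2^2)) - p"
    by (simp only: sq_expand2)
  also have "\<dots> = (u1^2 + u2^2 - p) + (smult t (u1 * v1 + u1 * v1) + smult t (u2 * v2 + u2 * v2))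
      + (smult (t^2) (v1^2) + smult (t^2) (v2^2))" by (simp add: algebra_simps)
  also have "smult t (u1 * v1 + u1 * v1) + smult t (u2 * v2 + u2 * v2) = smult t ((u1 * v1 + u2 * v2) + (u1 * v1 + u2 * v2))"
    by (simp add: smult_add_right[symmetric] algebra_simps)
  also have "smult (t^2) (v1^2) + smult (t^2) (v2^2) = smult (t^2) (v1^2 + v2^2)"
    by (simp add: smult_add_right)
  finally show ?thesis .
qed

theorem corollary6p1:
  fixes d :: nat and ip :: "real poly \<Rightarrow> real poly \<Rightarrow> real" and p u1 u2 :: "real poly"
  assumes ip: "inner_prod_on (bforms (2 * d)) ip"
    and p: "p \<in> bforms (2 * d)"
    and u: "u1 \<in> bforms d" "u2 \<in> bforms d"
    and grad: "\<forall>v1\<in>bforms d. \<forall>v2\<in>bforms d. deriv (fp_line ip p u1 u2 v1 v2) 0 = 0"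
    and hess: "\<forall>v1\<in>bforms d. \<forall>v2\<in>bforms d. deriv (deriv (fp_line ip p u1 u2 v1 v2)) 0 \<ge> 0"
  shows "u1^2 + u2^2 \<in> sos_cone d \<and>
         (\<forall>q\<in>sos_cone d. fp ip p u1 u2 \<le> ip (q - p) (q - p))"
proof -
  interpret ipsp ip "2 * d" using ip by unfold_locales
  define r where "r = u1^2 + u2^2 - p"
  have rV: "r \<in> bforms (2 * d)" using p u unfolding r_def by simp
  define L where "L q = ip (trunc (2 * d) q) r" for q
  have Lv: "L q = ip q r" if "q \<in> bforms (2 * d)" for q
    using that unfolding L_def bforms_iff by (simp add: trunc_id)
  have Ladd: "\<forall>x y. L (x + y) = L x + L y"
    unfolding L_def trunc_add using addL[OF trunc_bforms trunc_bforms rV] by simp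
  have Lsm: "\<forall>c x. L (smult c x) = c * L x"
    unfolding L_def trunc_smult using smultL[OF trunc_bforms rV] by simp
  have line: "ip r ((u1 * v1 + u2 * v2) + (u1 * v1 + u2 * v2)) = 0 \<and>
      0 \<le> ip ((u1 * v1 + u2 * v2) + (u1 * v1 + u2 * v2)) ((u1 * v1 + u2 * v2) + (u1 * v1 + u2 * v2))
        + 2 * ip r (v1^2 + v2^2)"
    if v1: "v1 \<in> bforms d" and v2: "v2 \<in> bforms d" for v1 v2
  proof -
    define M where "M = (u1 * v1 + u2 * v2) + (u1 * v1 + u2 * v2)"
    define b where "b = v1^2 + v2^2"
    have MV: "M \<in> bforms (2 * d)" unfolding M_def using u v1 v2 by (intro bforms_add bforms_mult2) assumption+
    have bV: "b \<in> bforms (2 * d)" unfolding b_def using v1 v2 by simp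
    define c0 where "c0 = ip r r"
    define c1 where "c1 = 2 * ip r M"
    define c2 where "c2 = ip M M + 2 * ip r b"
    define c3 where "c3 = 2 * ip M b"
    define c4 where "c4 = ip b b"
    have fl: "fp_line ip p u1 u2 v1 v2 = (\<lambda>t. c0 + c1 * t + c2 * t^2 + c3 * t^3 + c4 * t^4)"
    proof
      fix t :: real
      have "fp_line ip p u1 u2 v1 v2 t = ip (r + smult t M + smult (t^2) b) (r + smult t M + smult (t^2) b)"
        unfolding fp_line_def fp_def W_ident r_def M_def b_def ..
      also have "\<dots> = ip r r + 2 * t * ip r M + 2 * t^2 * ip r b + t^2 * ip M M + 2 * t * t^2 * ip M b + (t^2)^2 * ip b b"
        by (rule expand3[OF rV MV bV])
      also have "\<dots> = c0 + c1 * t + c2 * t^2 + c3 * t^3 + c4 * t^4"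
        unfolding c0_def c1_def c2_def c3_def c4_def by (simp add: algebra_simps power2_eq_square power3_eq_cube power4_eq_xxxx)
      finally show "fp_line ip p u1 u2 v1 v2 t = c0 + c1 * t + c2 * t^2 + c3 * t^3 + c4 * t^4" .
    qed
    have "deriv (fp_line ip p u1 u2 v1 v2) 0 = c1" unfolding fl deriv_quartic by simp
    moreover have "deriv (fp_line ip p u1 u2 v1 v2) 0 = 0" using grad v1 v2 by blast
    ultimately have g0: "c1 = 0" by simp
    have "deriv (deriv (fp_line ip p u1 u2 v1 v2)) 0 = 2 * c2" unfolding fl deriv_quartic by (rule deriv_cubic)
    moreover have "0 \<le> deriv (deriv (fp_line ip p u1 u2 v1 v2)) 0" using hess v1 v2 by blast
    ultimately have h0: "0 \<le> c2" by simp
    show ?thesis using g0 h0 unfolding c1_def c2_def M_def b_def by simp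
  qed
  have H1: "\<forall>v. degree v \<le> d \<longrightarrow> L (u1 * v) = 0 \<and> L (u2 * v) = 0"
  proof (intro allI impI conjI)
    fix v :: "real poly" assume dv: "degree v \<le> d"
    hence vV: "v \<in> bforms d" by (simp add: bforms_iff)
    have key: "L (u1 * v1 + u2 * v2) = 0" if v1: "v1 \<in> bforms d" and v2: "v2 \<in> bforms d" for v1 v2
    proof -
      have mV: "u1 * v1 + u2 * v2 \<in> bforms (2 * d)" using u v1 v2 by (simp add: bforms_mult2)
      have "ip r ((u1 * v1 + u2 * v2) + (u1 * v1 + u2 * v2)) = 0" using line[OF v1 v2] by simp
      hence "ip r (u1 * v1 + u2 * v2) + ip r (u1 * v1 + u2 * v2) = 0" using addR[OF mV mV rV] by simp
      hence "ip r (u1 * v1 + u2 * v2) = 0" by simp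
      thus ?thesis using Lv[OF mV] sym[OF mV rV] by simp
    qed
    show "L (u1 * v) = 0" using key[OF vV bforms_zero] by simp
    show "L (u2 * v) = 0" using key[OF bforms_zero vV] by simp
  qed
  have H2: "\<forall>v1 v2. degree v1 \<le> d \<longrightarrow> degree v2 \<le> d \<longrightarrow>
               0 \<le> 2 * (\<lambda>x. ip x x) (u1 * v1 + u2 * v2) + L (v1^2) + L (v2^2)"
  proof (intro allI impI)
    fix v1 v2 :: "real poly" assume "degree v1 \<le> d" "degree v2 \<le> d"
    hence v1: "v1 \<in> bforms d" and v2: "v2 \<in> bforms d" by (simp_all add: bforms_iff)
    define m where "m = u1 * v1 + u2 * v2"
    have mV: "m \<in> bforms (2 * d)" unfolding m_def using u v1 v2 by (simp add: bforms_mult2)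
    have sV: "v1^2 \<in> bforms (2 * d)" "v2^2 \<in> bforms (2 * d)" using v1 v2 by simp_all
    have mm: "m + m \<in> bforms (2 * d)" by (rule bforms_add[OF mV mV])
    have "ip (m + m) (m + m) = ip m (m + m) + ip m (m + m)" by (rule addL[OF mV mV mm])
    also have "ip m (m + m) = ip m m + ip m m" by (rule addR[OF mV mV mV])
    finally have "ip (m + m) (m + m) = 4 * ip m m" by linarith
    moreover have "ip r (v1^2 + v2^2) = L (v1^2) + L (v2^2)"
      using addR[OF sV rV] Lv[OF sV(1)] Lv[OF sV(2)] sym[OF sV(1) rV] sym[OF sV(2) rV] by simp
    ultimately show "0 \<le> 2 * (\<lambda>x. ip x x) (u1 * v1 + u2 * v2) + L (v1^2) + L (v2^2)"
      using line[OF v1 v2] unfolding m_def[symmetric] by simp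
  qed
  have du: "degree u1 \<le> d" "degree u2 \<le> d" using u by (simp_all add: bforms_iff)
  have Lsq: "\<forall>g. degree g \<le> d \<longrightarrow> L (g^2) \<ge> 0"
    by (rule main_alg[OF Ladd Lsm du H1 H2])
  have part1: "u1^2 + u2^2 \<in> sos_cone d"
    unfolding sos_cone_def using u by (intro CollectI exI[of _ "[u1, u2]"]) simp
  have sosprop: "q \<in> bforms (2 * d) \<and> L q \<ge> 0" if qS0: "q \<in> sos_cone d" for q
  proof -
    obtain gs where gs: "\<forall>g\<in>set gs. g \<in> bforms d" "q = sum_list (map (\<lambda>g. g^2) gs)"
      using qS0 unfolding sos_cone_def by blast
    have "sum_list (map (\<lambda>g. g^2) gs) \<in> bforms (2 * d) \<and> L (sum_list (map (\<lambda>g. g^2) gs)) \<ge> 0"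
      using gs(1)
    proof (induction gs)
      case Nil thus ?case using Lsm[rule_format, of 0 0] by simp
    next
      case (Cons g gs)
      have gV: "g \<in> bforms d" using Cons.prems by simp
      have "L (g^2) \<ge> 0" using Lsq gV by (simp add: bforms_iff)
      thus ?case using Cons gV Ladd by simp
    qed
    thus ?thesis using gs(2) by simp
  qed
  have part2: "fp ip p u1 u2 \<le> ip (q - p) (q - p)" if qS: "q \<in> sos_cone d" for q
  proof -
    define s where "s = u1^2 + u2^2"
    have sV: "s \<in> bforms (2 * d)" unfolding s_def using u by simp
    have qV: "q \<in> bforms (2 * d)" and Lq: "L q \<ge> 0" using sosprop[OF qS] by auto
    have Ls: "L s = 0"
    proof -
      have "L s = L (u1 * u1) + L (u2 * u2)" unfolding s_def power2_eq_square using Ladd by simp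
      thus ?thesis using H1 du by simp
    qed
    have qsV: "q - s \<in> bforms (2 * d)" using qV sV by simp
    have qp: "q - p = r + smult 1 (q - s) + smult 0 0" unfolding r_def s_def by simp
    have "ip (q - p) (q - p) = ip r r + 2 * 1 * ip r (q - s) + 2 * 0 * ip r 0 + 1^2 * ip (q - s) (q - s)
        + 2 * 1 * 0 * ip (q - s) 0 + 0^2 * ip 0 0"
      unfolding qp by (rule expand3[OF rV qsV bforms_zero])
    hence e: "ip (q - p) (q - p) = ip r r + 2 * ip r (q - s) + ip (q - s) (q - s)" by simp
    have "ip r (q - s) = L (q - s)" using Lv[OF qsV] sym[OF qsV rV] by simp
    also have "L (q - s) = L q - L s" using Ladd[rule_format, of "q - s" s] by simp
    finally have "ip r (q - s) \<ge> 0" using Lq Ls by simp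
    moreover have "ip (q - s) (q - s) \<ge> 0" by (rule nonneg[OF qsV])
    moreover have "fp ip p u1 u2 = ip r r" unfolding fp_def r_def ..
    ultimately show ?thesis using e by simp
  qed
  show ?thesis using part1 part2 by blast
qed

end
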